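(* Let $f:2^V\to\mathbb{Z}_{\ge0}$ be a connectivity function, $W\subseteq V$, and suppose $(C,V\setminus C,\emptyset)$ is a minimum $W$-improvement. Then $f(C\cap W')\le f(W')$ for every $W'\subseteq W$. Moreover, if $f(C\cap W')=f(W')$, then $(C\cup W', (V\setminus C)\setminus W', \emptyset)$ is also a minimum $W$-improvement.
   Context: A connectivity function $f:2^V\to\mathbb{Z}_{\ge0}$ ($V$ finite) satisfies $f(\emptyset)=0$, $f(X)=f(V\setminus X)$, and $f(X\cup Y)+f(X\cap Y)\le f(X)+f(Y)$. For $W\subseteq V$, a $W$-improvement is a tripartition $(C_1,C_2,C_3)$ of $V$ (pairwise disjoint, possibly empty, union $V$) with $f(C_i)<f(W)/2$, $f(C_i\cap W)<f(W)$, $f(C_i\cap(V\setminus W))<f(W)$ for each $i$. Its width is $\max_i f(C_i)$, its sum-width is $\sum_i f(C_i)$, and its arity is the number of nonempty $C_i$. A $W$-improvement is minimum if it has minimum width among all $W$-improvements, subject to that minimum arity, and subject to those minimum sum-width. *)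

theory Defs
  imports Main
begin

definition connectivity_function :: "'a set \<Rightarrow> ('a set \<Rightarrow> nat) \<Rightarrow> bool" where
  "connectivity_function V f \<longleftrightarrow> finite V \<and> f {} = 0 \<and>
     (\<forall>X. X \<subseteq> V \<longrightarrow> f X = f (V - X)) \<and>
     (\<forall>X Y. X \<subseteq> V \<longrightarrow> Y \<subseteq> V \<longrightarrow> f (X \<union> Y) + f (X \<inter> Y) \<le> f X + f Y)"

definition tripartition :: "'a set \<Rightarrow> 'a set \<times> 'a set \<times> 'a set \<Rightarrow> bool" where
  "tripartition V T \<longleftrightarrow> (case T of (C1, C2, C3) \<Rightarrow>
     C1 \<inter> C2 = {} \<and> C1 \<inter> C3 = {} \<and> C2 \<inter> C3 = {} \<and> C1 \<union> C2 \<union> C3 = V)"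

definition good_part :: "'a set \<Rightarrow> ('a set \<Rightarrow> nat) \<Rightarrow> 'a set \<Rightarrow> 'a set \<Rightarrow> bool" where
  "good_part V f W C \<longleftrightarrow> 2 * f C < f W \<and> f (C \<inter> W) < f W \<and> f (C \<inter> (V - W)) < f W"

text \<open>f(C) < f(W)/2 is written as 2 * f(C) < f(W) (exact for integer values).\<close>
definition improvement :: "'a set \<Rightarrow> ('a set \<Rightarrow> nat) \<Rightarrow> 'a set \<Rightarrow> 'a set \<times> 'a set \<times> 'a set \<Rightarrow> bool" where
  "improvement V f W T \<longleftrightarrow> tripartition V T \<and> (case T of (C1, C2, C3) \<Rightarrow>
     good_part V f W C1 \<and> good_part V f W C2 \<and> good_part V f W C3)"

definition width :: "('a set \<Rightarrow> nat) \<Rightarrow> 'a set \<times> 'a set \<times> 'a set \<Rightarrow> nat" where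
  "width f T = (case T of (C1, C2, C3) \<Rightarrow> max (f C1) (max (f C2) (f C3)))"

definition sum_width :: "('a set \<Rightarrow> nat) \<Rightarrow> 'a set \<times> 'a set \<times> 'a set \<Rightarrow> nat" where
  "sum_width f T = (case T of (C1, C2, C3) \<Rightarrow> f C1 + f C2 + f C3)"

definition arity :: "'a set \<times> 'a set \<times> 'a set \<Rightarrow> nat" where
  "arity T = (case T of (C1, C2, C3) \<Rightarrow>
     (if C1 \<noteq> {} then 1 else 0) + (if C2 \<noteq> {} then 1 else 0) + (if C3 \<noteq> {} then 1 else 0))"

definition min_improvement :: "'a set \<Rightarrow> ('a set \<Rightarrow> nat) \<Rightarrow> 'a set \<Rightarrow> 'a set \<times> 'a set \<times> 'a set \<Rightarrow> bool" where
  "min_improvement V f W T \<longleftrightarrow> improvement V f W T \<and>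
     (\<forall>T'. improvement V f W T' \<longrightarrow> width f T \<le> width f T') \<and>
     (\<forall>T'. improvement V f W T' \<and> width f T' = width f T \<longrightarrow> arity T \<le> arity T') \<and>
     (\<forall>T'. improvement V f W T' \<and> width f T' = width f T \<and> arity T' = arity T
        \<longrightarrow> sum_width f T \<le> sum_width f T')"

end

theory Submission
  imports Defs
begin

lemma key:
  assumes cf: "connectivity_function V f" and WV: "W \<subseteq> V"
    and imp: "improvement V f W (C, V - C, {})" and CV: "C \<subseteq> V"
    and W'W: "W' \<subseteq> W" and le: "f W' \<le> f (C \<inter> W')"
  shows "improvement V f W (C \<union> W', V - C - W', {}) \<and> f (C \<union> W') + f (C \<inter> W') \<le> f C + f W'"
proof -
  have fin: "finite V" and f0: "f {} = 0" and comp: "\<And>X. X \<subseteq> V \<Longrightarrow> f X = f (V - X)"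
    and sub: "\<And>X Y. X \<subseteq> V \<Longrightarrow> Y \<subseteq> V \<Longrightarrow> f (X \<union> Y) + f (X \<inter> Y) \<le> f X + f Y"
    using cf unfolding connectivity_function_def by blast+
  have W'V: "W' \<subseteq> V" using W'W WV by auto
  have g1: "good_part V f W C" and g2: "good_part V f W (V - C)"
    using imp unfolding improvement_def by auto
  have s1: "f (C \<union> W') + f (C \<inter> W') \<le> f C + f W'" using sub[OF CV W'V] .
  have s2: "f ((C \<inter> W) \<union> W') + f ((C \<inter> W) \<inter> W') \<le> f (C \<inter> W) + f W'"
    using sub[of "C \<inter> W" W'] CV W'V by auto
  have e2: "(C \<inter> W) \<inter> W' = C \<inter> W'" using W'W by auto
  have e2': "(C \<union> W') \<inter> W = (C \<inter> W) \<union> W'" using W'W by auto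
  have s3: "f (((V - C) \<inter> W) \<union> (V - W')) + f (((V - C) \<inter> W) \<inter> (V - W')) \<le> f ((V - C) \<inter> W) + f (V - W')"
    using sub[of "(V - C) \<inter> W" "V - W'"] by auto
  have e3: "((V - C) \<inter> W) \<union> (V - W') = V - (C \<inter> W')" using W'W WV by auto
  have e3': "((V - C) \<inter> W) \<inter> (V - W') = (V - C - W') \<inter> W" by auto
  have "C \<inter> W' \<subseteq> V" using CV by auto
  from comp[OF this] have c3: "f (V - (C \<inter> W')) = f (C \<inter> W')" by (rule sym)
  have c3': "f (V - W') = f W'" using comp[OF W'V] by auto
  have e4: "(C \<union> W') \<inter> (V - W) = C \<inter> (V - W)" using W'W by auto
  have e5: "(V - C - W') \<inter> (V - W) = (V - C) \<inter> (V - W)" using W'W by auto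
  have e6: "V - C - W' = V - (C \<union> W')" by auto
  have c6: "f (V - C - W') = f (C \<union> W')" using comp[of "C \<union> W'"] CV W'V e6 by auto
  have a: "f (C \<union> W') \<le> f C" using s1 le by linarith
  have b: "f ((C \<union> W') \<inter> W) \<le> f (C \<inter> W)" using s2 le unfolding e2 e2' by linarith
  have c: "f ((V - C - W') \<inter> W) \<le> f ((V - C) \<inter> W)" using s3 c3 c3' le unfolding e3 e3' by linarith
  have "good_part V f W (C \<union> W')" using g1 a b e4 unfolding good_part_def by auto
  moreover have "good_part V f W (V - C - W')" using g2 g1 a c e5 c6 unfolding good_part_def by auto
  moreover have "good_part V f W {}" using g1 f0 unfolding good_part_def by auto
  moreover have "tripartition V (C \<union> W', V - C - W', {})" using CV W'V unfolding tripartition_def by auto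
  ultimately show ?thesis using s1 unfolding improvement_def by auto
qed

theorem lemma6:
  fixes V W C :: "'a set" and f :: "'a set \<Rightarrow> nat"
  assumes "connectivity_function V f"
    and "W \<subseteq> V"
    and "min_improvement V f W (C, V - C, {})"
  shows "(\<forall>W'. W' \<subseteq> W \<longrightarrow> f (C \<inter> W') \<le> f W') \<and>
         (\<forall>W'. W' \<subseteq> W \<longrightarrow> f (C \<inter> W') = f W' \<longrightarrow>
            min_improvement V f W (C \<union> W', (V - C) - W', {}))"
proof -
  have f0: "f {} = 0" and comp: "\<And>X. X \<subseteq> V \<Longrightarrow> f X = f (V - X)"
    using assms(1) unfolding connectivity_function_def by blast+
  have imp: "improvement V f W (C, V - C, {})" using assms(3) unfolding min_improvement_def by auto
  have CV: "C \<subseteq> V" using imp unfolding improvement_def tripartition_def by auto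
  have g1: "good_part V f W C" and g2: "good_part V f W (V - C)"
    using imp unfolding improvement_def by auto
  have Cne: "C \<noteq> {}" proof
    assume "C = {}" then have "(V - C) \<inter> W = W" using assms(2) by auto
    then show False using g2 unfolding good_part_def by simp
  qed
  have VCne: "V - C \<noteq> {}"
  proof
    assume "V - C = {}" then have "C = V" using CV by auto
    then have "C \<inter> W = W" using assms(2) by auto
    then show False using g1 unfolding good_part_def by simp
  qed
  have fVC: "f (V - C) = f C" using comp[OF CV] by simp
  have wT: "width f (C, V - C, {}) = f C" unfolding width_def using fVC f0 by simp
  have aT: "arity (C, V - C, {}) = 2" unfolding arity_def using Cne VCne by simp
  have sT: "sum_width f (C, V - C, {}) = 2 * f C" unfolding sum_width_def using fVC f0 by simp
  have M: "(\<forall>T'. improvement V f W T' \<longrightarrow> width f (C, V - C, {}) \<le> width f T') \<and>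
     (\<forall>T'. improvement V f W T' \<and> width f T' = width f (C, V - C, {}) \<longrightarrow> arity (C, V - C, {}) \<le> arity T') \<and>
     (\<forall>T'. improvement V f W T' \<and> width f T' = width f (C, V - C, {}) \<and> arity T' = arity (C, V - C, {})
        \<longrightarrow> sum_width f (C, V - C, {}) \<le> sum_width f T')"
    using assms(3) unfolding min_improvement_def by blast
  have mw: "f C \<le> width f T'" if "improvement V f W T'" for T'
  proof -
    have "width f (C, V - C, {}) \<le> width f T'" using M that by blast
    then show ?thesis using wT by simp
  qed
  have ma: "2 \<le> arity T'" if "improvement V f W T'" "width f T' = f C" for T'
  proof -
    have e: "width f T' = width f (C, V - C, {})" using that wT by simp
    have "arity (C, V - C, {}) \<le> arity T'" using M that(1) e by blast
    then show ?thesis using aT by simp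
  qed
  have ms: "2 * f C \<le> sum_width f T'" if "improvement V f W T'" "width f T' = f C" "arity T' = 2" for T'
  proof -
    have e: "width f T' = width f (C, V - C, {})" using that wT by simp
    have e2: "arity T' = arity (C, V - C, {})" using that aT by simp
    have "sum_width f (C, V - C, {}) \<le> sum_width f T'" using M that(1) e e2 by blast
    then show ?thesis using sT by simp
  qed
  have wT': "width f (C \<union> W', V - C - W', {}) = f (C \<union> W')"
    and sT': "sum_width f (C \<union> W', V - C - W', {}) = 2 * f (C \<union> W')"
    and aT': "arity (C \<union> W', V - C - W', {}) \<le> 2" if "W' \<subseteq> W" for W'
  proof -
    have "V - C - W' = V - (C \<union> W')" by auto
    then have "f (V - C - W') = f (C \<union> W')" using comp[of "C \<union> W'"] CV that assms(2) by auto
    then show "width f (C \<union> W', V - C - W', {}) = f (C \<union> W')"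
      "sum_width f (C \<union> W', V - C - W', {}) = 2 * f (C \<union> W')"
      unfolding width_def sum_width_def using f0 by simp_all
    show "arity (C \<union> W', V - C - W', {}) \<le> 2" unfolding arity_def by simp
  qed
  have P1: "\<forall>W'. W' \<subseteq> W \<longrightarrow> f (C \<inter> W') \<le> f W'"
  proof (intro allI impI, rule ccontr)
    fix W' assume W'W: "W' \<subseteq> W" and "\<not> f (C \<inter> W') \<le> f W'"
    then have lt: "f W' < f (C \<inter> W')" by simp
    from key[OF assms(1,2) imp CV W'W] lt
    have i: "improvement V f W (C \<union> W', V - C - W', {})" and "f (C \<union> W') < f C" by auto
    then show False using mw[OF i] wT'[OF W'W] by simp
  qed
  have P2: "min_improvement V f W (C \<union> W', (V - C) - W', {})"
    if W'W: "W' \<subseteq> W" and eq: "f (C \<inter> W') = f W'" for W'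
  proof -
    from key[OF assms(1,2) imp CV W'W] eq
    have i: "improvement V f W (C \<union> W', V - C - W', {})" and "f (C \<union> W') \<le> f C" by auto
    with mw[OF i] wT'[OF W'W] have feq: "f (C \<union> W') = f C" by simp
    show ?thesis unfolding min_improvement_def
    proof (intro conjI allI impI)
      show "improvement V f W (C \<union> W', V - C - W', {})" by (rule i)
    next
      fix T' assume "improvement V f W T'"
      then show "width f (C \<union> W', V - C - W', {}) \<le> width f T'" using mw wT'[OF W'W] feq by simp
    next
      fix T' assume h: "improvement V f W T' \<and> width f T' = width f (C \<union> W', V - C - W', {})"
      then show "arity (C \<union> W', V - C - W', {}) \<le> arity T'" using ma[of T'] wT'[OF W'W] feq aT'[OF W'W] by simp
    next
      fix T' assume h: "improvement V f W T' \<and> width f T' = width f (C \<union> W', V - C - W', {})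
         \<and> arity T' = arity (C \<union> W', V - C - W', {})"
      then have "arity T' \<le> 2" using aT'[OF W'W] by simp
      moreover have "2 \<le> arity T'" using ma[of T'] h wT'[OF W'W] feq by simp
      ultimately have "arity T' = 2" by simp
      then show "sum_width f (C \<union> W', V - C - W', {}) \<le> sum_width f T'"
        using ms[of T'] h wT'[OF W'W] sT'[OF W'W] feq by simp
    qed
  qed
  show ?thesis using P1 P2 by blast
qed

end
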